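(* If $|\Sigma|\ge3$, then the set $\mathtt{REV}$ of injective cellular automata is not closed in $(\mathtt{CA},\delta)$; that is, there is a sequence of injective CA converging in $\delta$ to a non-injective CA.
   Context: $\Sigma$ is a finite alphabet, $N(r)=[-r,r]$. A cellular automaton (CA) is a map $c:\Sigma^\mathbb{Z}\to\Sigma^\mathbb{Z}$ of the form $c(x)_i=F(x_{[i-r,i+r]})$ for a local function $F:\Sigma^{N(r)}\to\Sigma$. $\mathtt{CA}$ is the set of all CA, $\mathtt{REV}$ the injective ones. For $c,d\in\mathtt{CA}$ with common radius $r$, $D^c_d$ is the set of $w\in\Sigma^{N(r)}$ on which the local rules of $c$ and $d$ give different outputs, and $\delta(c,d)=|D^c_d|/|\Sigma|^{2r+1}$ (independent of $r$). *)

theory Defs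
  imports "HOL-Analysis.Analysis" "HOL-Library.FuncSet"
begin

type_synonym 'a config = "int \<Rightarrow> 'a"

definition patterns :: "nat \<Rightarrow> (int \<Rightarrow> 'a) set" where
  "patterns r = PiE {- int r .. int r} (\<lambda>_. UNIV)"

definition window :: "nat \<Rightarrow> 'a config \<Rightarrow> int \<Rightarrow> (int \<Rightarrow> 'a)" where
  "window r x i = restrict (\<lambda>j. x (i + j)) {- int r .. int r}"

definition has_radius :: "nat \<Rightarrow> ('a config \<Rightarrow> 'a config) \<Rightarrow> bool" where
  "has_radius r c \<longleftrightarrow> (\<exists>F. \<forall>x i. c x i = F (window r x i))"

definition CA :: "('a config \<Rightarrow> 'a config) set" where
  "CA = {c. \<exists>r. has_radius r c}"

definition REV :: "('a config \<Rightarrow> 'a config) set" where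
  "REV = {c \<in> CA. inj c}"

text \<open>For a pattern w of radius r (viewed as a configuration undefined outside N(r)),
  c w 0 is the value of the local rule of c (of radius r) on w.\<close>
definition delta :: "('a::finite config \<Rightarrow> 'a config) \<Rightarrow> ('a config \<Rightarrow> 'a config) \<Rightarrow> real" where
  "delta c d = (let r = (LEAST r. has_radius r c \<and> has_radius r d) in
     real (card {w \<in> patterns r. c w 0 \<noteq> d w 0}) / real (CARD('a)) ^ (2 * r + 1))"

end

theory Submission
  imports Defs
begin

definition bitp :: "'a \<Rightarrow> 'a \<Rightarrow> 'a \<Rightarrow> bool" where
  "bitp a0 a1 s \<longleftrightarrow> s = a0 \<or> s = a1"

definition bx :: "'a \<Rightarrow> 'a \<Rightarrow> 'a \<Rightarrow> 'a \<Rightarrow> 'a" where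
  "bx a0 a1 u v = (if u = a0 then v else if v = a0 then a1 else a0)"

definition cl :: "'a \<Rightarrow> 'a \<Rightarrow> 'a \<Rightarrow> 'a \<Rightarrow> 'a" where
  "cl a0 a1 u v = (if bitp a0 a1 u \<and> bitp a0 a1 v then bx a0 a1 u v else u)"

definition climit :: "'a \<Rightarrow> 'a \<Rightarrow> 'a config \<Rightarrow> 'a config" where
  "climit a0 a1 x i = cl a0 a1 (x i) (x (i+1))"

definition capprox :: "'a \<Rightarrow> 'a \<Rightarrow> nat \<Rightarrow> 'a config \<Rightarrow> 'a config" where
  "capprox a0 a1 m x i = (if \<exists>j\<in>{1..int m}. \<not> bitp a0 a1 (x (i+j))
      then cl a0 a1 (x i) (x (i+1)) else x i)"

lemma radius_limit:
  assumes "m \<ge> 1" shows "has_radius m (climit a0 a1)"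
  unfolding has_radius_def
proof (intro exI allI)
  fix x :: "'a config" and i
  show "climit a0 a1 x i = (\<lambda>w. cl a0 a1 (w 0) (w 1)) (window m x i)"
    using assms by (simp add: climit_def window_def)
qed

lemma radius_approx:
  assumes "m \<ge> 1" shows "has_radius m (capprox a0 a1 m)"
  unfolding has_radius_def
proof (intro exI allI)
  fix x :: "'a config" and i
  have e: "(\<exists>j\<in>{1..int m}. \<not> bitp a0 a1 (x (i+j))) =
        (\<exists>j\<in>{1..int m}. \<not> bitp a0 a1 (window m x i j))"
    by (auto simp: window_def)
  show "capprox a0 a1 m x i = (\<lambda>w. if \<exists>j\<in>{1..int m}. \<not> bitp a0 a1 (w j)
      then cl a0 a1 (w 0) (w 1) else w 0) (window m x i)"
    using assms e by (simp add: capprox_def window_def)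
qed

lemma cl_bit:
  assumes "a0 \<noteq> a1"
  shows "bitp a0 a1 (cl a0 a1 u v) = bitp a0 a1 u"
  using assms by (auto simp: cl_def bx_def bitp_def)

lemma cl_nonbit: "\<not> bitp a0 a1 u \<Longrightarrow> cl a0 a1 u v = u"
  by (simp add: cl_def)

lemma cl_sep: "\<not> bitp a0 a1 v \<Longrightarrow> cl a0 a1 u v = u"
  by (simp add: cl_def)

lemma bx_inj:
  assumes "a0 \<noteq> a1" "bitp a0 a1 u" "bitp a0 a1 u'" "bitp a0 a1 v"
    "bx a0 a1 u v = bx a0 a1 u' v"
  shows "u = u'"
  using assms by (auto simp: bx_def bitp_def split: if_splits)

lemma approx_inj:
  assumes d: "a0 \<noteq> a1" and m: "m \<ge> 1"
  shows "inj (capprox a0 a1 m)"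
proof (rule injI)
  fix x y :: "'a config"
  assume eq: "capprox a0 a1 m x = capprox a0 a1 m y"
  have bitc: "\<And>z i. bitp a0 a1 (capprox a0 a1 m z i) = bitp a0 a1 (z i)"
    using d by (simp add: capprox_def cl_bit)
  have nb: "\<And>z i. \<not> bitp a0 a1 (z i) \<Longrightarrow> capprox a0 a1 m z i = z i"
    by (simp add: capprox_def cl_nonbit)
  have bits: "\<And>i. bitp a0 a1 (x i) = bitp a0 a1 (y i)"
    using bitc eq by metis
  have nbeq: "\<And>i. \<not> bitp a0 a1 (x i) \<Longrightarrow> x i = y i"
    using nb bits eq by metis
  have key: "\<And>i. bitp a0 a1 (x i) \<Longrightarrow> (\<exists>t\<in>{1..int d+1}. \<not> bitp a0 a1 (x (i+t)))
      \<Longrightarrow> d + 1 \<le> m \<Longrightarrow> x i = y i" for d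
  proof (induction d)
    case 0
    then have s: "\<not> bitp a0 a1 (x (i+1))" by auto
    then have s': "\<not> bitp a0 a1 (y (i+1))" using bits by simp
    have c1: "\<exists>j\<in>{1..int m}. \<not> bitp a0 a1 (x (i+j))" using s m by force
    have c2: "\<exists>j\<in>{1..int m}. \<not> bitp a0 a1 (y (i+j))" using s' m by force
    have "capprox a0 a1 m x i = x i" using c1 s by (simp add: capprox_def cl_sep)
    moreover have "capprox a0 a1 m y i = y i" using c2 s' by (simp add: capprox_def cl_sep)
    ultimately show ?case using eq by metis
  next
    case (Suc d)
    obtain t where t: "t \<in> {1..int (Suc d)+1}" "\<not> bitp a0 a1 (x (i+t))" using Suc.prems by blast
    have c1: "\<exists>j\<in>{1..int m}. \<not> bitp a0 a1 (x (i+j))" using t Suc.prems(3) by force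
    have c2: "\<exists>j\<in>{1..int m}. \<not> bitp a0 a1 (y (i+j))" using c1 bits by blast
    show ?case
    proof (cases "bitp a0 a1 (x (i+1))")
      case False
      then have s': "\<not> bitp a0 a1 (y (i+1))" using bits by simp
      have "capprox a0 a1 m x i = x i" using c1 False by (simp add: capprox_def cl_sep)
      moreover have "capprox a0 a1 m y i = y i" using c2 s' by (simp add: capprox_def cl_sep)
      ultimately show ?thesis using eq by metis
    next
      case True
      have "t \<noteq> 1" using True t by auto
      then have "t - 1 \<in> {1..int d+1}" using t by auto
      moreover have "i + 1 + (t - 1) = i + t" by simp
      ultimately have ex: "\<exists>t\<in>{1..int d+1}. \<not> bitp a0 a1 (x (i + 1 + t))" using t by metis
      have xy1: "x (i+1) = y (i+1)" using Suc.IH[OF True ex] Suc.prems(3) by simp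
      have by0: "bitp a0 a1 (y i)" using Suc.prems(1) bits by simp
      have "capprox a0 a1 m x i = capprox a0 a1 m y i" using eq by simp
      then have "cl a0 a1 (x i) (x (i+1)) = cl a0 a1 (y i) (y (i+1))"
        using c1 c2 unfolding capprox_def by simp
      then have "bx a0 a1 (x i) (x (i+1)) = bx a0 a1 (y i) (x (i+1))"
        using True Suc.prems(1) by0 xy1 by (simp add: cl_def)
      then show ?thesis using bx_inj[OF d Suc.prems(1) by0 True] by simp
    qed
  qed
  show "x = y"
  proof
    fix i
    show "x i = y i"
    proof (cases "bitp a0 a1 (x i)")
      case False then show ?thesis using nbeq by simp
    next
      case True
      show ?thesis
      proof (cases "\<exists>j\<in>{1..int m}. \<not> bitp a0 a1 (x (i+j))")
        case True2: True
        have "m - 1 + 1 = m" using m by simp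
        moreover have "int (m - 1) + 1 = int m" using m by simp
        ultimately show ?thesis using key[of i "m - 1"] True True2 by simp
      next
        case False
        then have "\<not> (\<exists>j\<in>{1..int m}. \<not> bitp a0 a1 (y (i+j)))" using bits by simp
        moreover have "capprox a0 a1 m x i = capprox a0 a1 m y i" using eq by simp
        ultimately show ?thesis using False unfolding capprox_def by simp
      qed
    qed
  qed
qed

lemma climit_not_inj:
  assumes "a0 \<noteq> a1" shows "\<not> inj (climit a0 a1)"
proof
  assume i: "inj (climit a0 a1)"
  have "climit a0 a1 (\<lambda>_. a0) = climit a0 a1 (\<lambda>_. a1)"
    using assms by (auto simp: climit_def cl_def bx_def bitp_def)
  then have "(\<lambda>_::int. a0) = (\<lambda>_. a1)" using i by (meson injD)
  then have "a0 = a1" by (rule fun_cong[of _ _ 0])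
  then show False using assms by simp
qed

lemma least_radius:
  assumes d: "a0 \<noteq> a1" "a2 \<noteq> a0" "a2 \<noteq> a1" and m: "m \<ge> 2"
  shows "(LEAST r. has_radius r (capprox a0 a1 m) \<and> has_radius r (climit a0 a1)) = m"
proof (rule Least_equality)
  show "has_radius m (capprox a0 a1 m) \<and> has_radius m (climit a0 a1)"
    using m radius_approx[of m a0 a1] radius_limit[of m a0 a1] by auto
next
  fix r assume h: "has_radius r (capprox a0 a1 m) \<and> has_radius r (climit a0 a1)"
  show "m \<le> r"
  proof (rule ccontr)
    assume "\<not> m \<le> r"
    then have lt: "r < m" by simp
    from h obtain F where F: "\<And>x i. capprox a0 a1 m x i = F (window r x i)"
      unfolding has_radius_def by blast
    define x :: "'a config" where "x = (\<lambda>j. if j = 0 \<or> j = 1 then a1 else if j = int m then a2 else a0)"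
    define y :: "'a config" where "y = (\<lambda>j. if j = 0 \<or> j = 1 then a1 else a0)"
    have w: "window r x 0 = window r y 0"
      unfolding window_def x_def y_def using lt by (auto simp: restrict_def)
    have "\<exists>j\<in>{1..int m}. \<not> bitp a0 a1 (x (0+j))"
      using m d by (auto simp: x_def bitp_def intro!: bexI[of _ "int m"])
    then have cx: "capprox a0 a1 m x 0 = a0"
      using m d by (simp add: capprox_def cl_def bx_def bitp_def x_def)
    have "\<not> (\<exists>j\<in>{1..int m}. \<not> bitp a0 a1 (y (0+j)))"
      by (auto simp: y_def bitp_def)
    then have cy: "capprox a0 a1 m y 0 = a1"
      unfolding capprox_def by (simp add: y_def)
    show False using F[of x 0] F[of y 0] w cx cy d by simp
  qed
qed

lemma card_bound:
  fixes a0 a1 :: "'a::finite"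
  assumes d: "a0 \<noteq> a1"
  shows "card {w \<in> patterns m. capprox a0 a1 m w 0 \<noteq> climit a0 a1 w 0}
     \<le> 2 ^ m * CARD('a) ^ (m + 1)"
proof -
  let ?B = "\<lambda>j::int. if j \<in> {1..int m} then {a0, a1} else (UNIV::'a set)"
  have sub: "{w \<in> patterns m. capprox a0 a1 m w 0 \<noteq> climit a0 a1 w 0} \<subseteq> PiE {- int m .. int m} ?B"
  proof
    fix w assume "w \<in> {w \<in> patterns m. capprox a0 a1 m w 0 \<noteq> climit a0 a1 w 0}"
    then have wp: "w \<in> patterns m" and ne: "capprox a0 a1 m w 0 \<noteq> climit a0 a1 w 0" by auto
    have "\<not> (\<exists>j\<in>{1..int m}. \<not> bitp a0 a1 (w (0+j)))"
    proof
      assume "\<exists>j\<in>{1..int m}. \<not> bitp a0 a1 (w (0+j))"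
      then have "capprox a0 a1 m w 0 = cl a0 a1 (w 0) (w (0+1))" unfolding capprox_def by simp
      then show False using ne by (simp add: climit_def)
    qed
    then have "\<forall>j\<in>{1..int m}. w j \<in> {a0, a1}" by (auto simp: bitp_def)
    then show "w \<in> PiE {- int m .. int m} ?B"
      using wp unfolding patterns_def by (auto simp: PiE_def Pi_def)
  qed
  have fin: "finite (PiE {- int m .. int m} ?B)" by (simp add: finite_PiE)
  have "card (PiE {- int m .. int m} ?B) = (\<Prod>j\<in>{- int m .. int m}. card (?B j))"
    by (simp add: card_PiE)
  also have "\<dots> = (\<Prod>j\<in>{- int m .. 0}. card (?B j)) * (\<Prod>j\<in>{1 .. int m}. card (?B j))"
  proof -
    have "{- int m .. int m} = {- int m .. 0} \<union> {1 .. int m}" by auto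
    then show ?thesis by (simp add: prod.union_disjoint ivl_disj_int)
  qed
  also have "(\<Prod>j\<in>{- int m .. 0}. card (?B j)) = CARD('a) ^ (m+1)"
  proof -
    have "(\<Prod>j\<in>{- int m .. 0}. card (?B j)) = (\<Prod>j\<in>{- int m .. 0}. CARD('a))"
      by (rule prod.cong) auto
    also have "\<dots> = CARD('a) ^ card {- int m .. 0}" by simp
    also have "card {- int m .. (0::int)} = m + 1" by simp
    finally show ?thesis .
  qed
  also have "(\<Prod>j\<in>{1 .. int m}. card (?B j)) = 2 ^ m"
  proof -
    have "(\<Prod>j\<in>{1 .. int m}. card (?B j)) = (\<Prod>j\<in>{1 .. int m}. 2)"
      by (rule prod.cong) (auto simp: d)
    also have "\<dots> = 2 ^ card {1 .. int m}" by simp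
    also have "card {1 .. int m} = m" by simp
    finally show ?thesis .
  qed
  finally have "card (PiE {- int m .. int m} ?B) = 2 ^ m * CARD('a) ^ (m + 1)" by simp
  then show ?thesis using card_mono[OF fin sub] by simp
qed

theorem mainTheorem9:
  assumes "CARD('a::finite) \<ge> 3"
  shows "\<exists>(cs :: nat \<Rightarrow> 'a config \<Rightarrow> 'a config) c.
           (\<forall>n. cs n \<in> REV) \<and> c \<in> CA \<and> c \<notin> REV \<and>
           (\<lambda>n. delta (cs n) c) \<longlonglongrightarrow> 0"
proof -
  obtain a0 a1 a2 :: 'a where d: "a0 \<noteq> a1" "a2 \<noteq> a0" "a2 \<noteq> a1"
  proof -
    have "\<not> (\<forall>a0 a1 a2::'a. a0 = a1 \<or> a2 = a0 \<or> a2 = a1)"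
    proof
      assume h: "\<forall>a0 a1 a2::'a. a0 = a1 \<or> a2 = a0 \<or> a2 = a1"
      have "\<exists>A::'a set. A \<subseteq> UNIV \<and> card A = 3"
        using assms by (meson obtain_subset_with_card_n)
      then obtain A :: "'a set" where "card A = 3" by blast
      then obtain x y z where "A = {x,y,z}" "x \<noteq> y" "x \<noteq> z" "y \<noteq> z" using card_3_iff[of A] by auto
      then show False using h by blast
    qed
    then show ?thesis using that by blast
  qed
  define cs where "cs = (\<lambda>n::nat. capprox a0 a1 (n+2))"
  define c where "c = climit a0 a1"
  have rev: "\<forall>n. cs n \<in> REV"
  proof
    fix n
    have "has_radius (n+2) (capprox a0 a1 (n+2))" by (rule radius_approx) simp
    moreover have "inj (capprox a0 a1 (n+2))" by (rule approx_inj[OF d(1)]) simp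
    ultimately show "cs n \<in> REV" by (auto simp: cs_def REV_def CA_def)
  qed
  have "has_radius 1 (climit a0 a1)" by (rule radius_limit) simp
  then have ca: "c \<in> CA" unfolding c_def CA_def by blast
  have nrev: "c \<notin> REV" using climit_not_inj[OF d(1)] by (simp add: c_def REV_def)
  define q where "q = real CARD('a)"
  have q3: "q \<ge> 3" using assms by (simp add: q_def)
  have bound: "delta (cs n) c \<le> (2 / q) ^ n" for n
  proof -
    let ?m = "n + 2"
    have L: "(LEAST r. has_radius r (cs n) \<and> has_radius r c) = ?m"
      unfolding cs_def c_def by (rule least_radius[OF d]) simp
    have "delta (cs n) c = real (card {w \<in> patterns ?m. cs n w 0 \<noteq> c w 0}) / q ^ (2 * ?m + 1)"
      unfolding delta_def Let_def L q_def by (rule refl)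
    also have "\<dots> = real (card {w \<in> patterns ?m. capprox a0 a1 ?m w 0 \<noteq> climit a0 a1 w 0}) / q ^ (2 * ?m + 1)"
      by (simp only: cs_def c_def)
    also have "\<dots> \<le> (2 ^ ?m * q ^ (?m + 1)) / q ^ (2 * ?m + 1)"
    proof (rule divide_right_mono)
      have cb: "card {w \<in> patterns ?m. capprox a0 a1 ?m w 0 \<noteq> climit a0 a1 w 0} \<le> 2 ^ ?m * CARD('a) ^ (?m + 1)"
        by (rule card_bound[OF d(1)])
      show "real (card {w \<in> patterns ?m. capprox a0 a1 ?m w 0 \<noteq> climit a0 a1 w 0}) \<le> 2 ^ ?m * q ^ (?m + 1)"
        using of_nat_mono[OF cb, where 'a=real] unfolding q_def by simp
      show "0 \<le> q ^ (2 * ?m + 1)" using q3 by simp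
    qed
    also have "\<dots> = (2 / q) ^ ?m"
    proof -
      have e: "q ^ (2 * ?m + 1) = q ^ ?m * q ^ (?m + 1)"
      proof -
        have "2 * ?m + 1 = ?m + (?m + 1)" by simp
        then show ?thesis by (simp only: power_add)
      qed
      have qp: "q ^ (?m + 1) \<noteq> 0" using q3 by simp
      have "(2 ^ ?m * q ^ (?m + 1)) / q ^ (2 * ?m + 1) = 2 ^ ?m / q ^ ?m"
        unfolding e using qp by simp
      also have "\<dots> = (2 / q) ^ ?m" by (simp add: power_divide)
      finally show ?thesis .
    qed
    also have "\<dots> \<le> (2 / q) ^ n"
      by (rule power_decreasing) (use q3 in auto)
    finally show ?thesis .
  qed
  have nonneg: "delta (cs n) c \<ge> 0" for n
    unfolding delta_def Let_def by simp
  have lim: "(\<lambda>n. (2 / q) ^ n) \<longlonglongrightarrow> 0"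
    by (rule LIMSEQ_power_zero) (use q3 in auto)
  have "(\<lambda>n. delta (cs n) c) \<longlonglongrightarrow> 0"
  proof (rule tendsto_sandwich[of "\<lambda>_. 0" _ _ "\<lambda>n. (2 / q) ^ n"])
    show "\<forall>\<^sub>F n in sequentially. 0 \<le> delta (cs n) c" using nonneg by (simp add: always_eventually)
    show "\<forall>\<^sub>F n in sequentially. delta (cs n) c \<le> (2 / q) ^ n" using bound by (simp add: always_eventually)
    show "(\<lambda>_. 0) \<longlonglongrightarrow> (0::real)" by simp
    show "(\<lambda>n. (2 / q) ^ n) \<longlonglongrightarrow> 0" by (rule lim)
  qed
  then show ?thesis using rev ca nrev by blast
qed

end
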